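(* Let $\mathcal{A}$ be a finite set of at least 3 alternatives, $N\ge 2$, and $w:\underline{\mathcal{P}}^N\to\underline{\mathcal{P}}$ a Social Welfare Function satisfying Unanimity, IIA and Non-Dictatorship. Then for every function $\mathrm{app}:\underline{\mathcal{P}}^N\times\underline{\mathcal{P}}\to\underline{\mathcal{P}}^N$ there is no $\Upsilon\in\underline{\mathcal{P}}^N$ that is consistency-respecting, i.e. there is no $\Upsilon$ such that for all $d,d'\in\mathcal{P}^N$: $d\Join d'$ if and only if $\mathrm{app}(\Upsilon,w(d))\Join\mathrm{app}(\Upsilon,w(d'))$.
   Context: $\mathcal{P}$ is the set of weak orders on $\mathcal{A}$; $\underline{\mathcal{P}}=\mathcal{P}\cup\{\mathbf{c}\}$, $\mathbf{c}$ a new element representing (all) contradictory preference cycles. Strictness order: $r\le s$ iff every strict preference of $s$ is a strict preference of $r$, with $\mathbf{c}$ added as bottom; $\wedge$ denotes greatest lower bound in $\underline{\mathcal{P}}$ (two weak orders with opposing strict preferences have meet $\mathbf{c}$). On $\underline{\mathcal{P}}^N$ (tuples over $\underline{\mathcal{P}}$; $\mathcal{P}^N$ the valid profiles) $\wedge$ is taken coordinatewise, and $p\Join q$ ("consistent") means $p\wedge q\in\mathcal{P}^N$, i.e. $p_j\wedge q_j\ne\mathbf{c}$ for every $j$. Only the values of $w$ on $\mathcal{P}^N$ matter for the following axioms. Unanimity: if every individual of $p\in\mathcal{P}^N$ strictly prefers $a$ to $b$, so does $w(p)$. IIA: the aggregate comparison of $a$ and $b$ depends only on the individuals' comparisons of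 $a$ and $b$ (for these two axioms an output $\mathbf{c}$ is understood as a preference cycle, i.e. an intransitive assignment of pairwise comparisons). $w$ has a dictator at $i$ if for all $p\in\mathcal{P}^N$: $w(p)=\mathbf{c}$ implies $p_i=\mathbf{i}$ (total indifference), and $p_i\ne\mathbf{i}$ implies $w(p)\le p_i$. Non-Dictatorship: $w$ has no dictator. *)

theory Defs
  imports Main
begin

text \<open>Weak orders on the alternatives 'a: reflexive, total, transitive relations,
  where (x,y) in R means "x is weakly preferred to y".\<close>

definition weak_order :: "('a \<times> 'a) set \<Rightarrow> bool" where
  "weak_order R \<longleftrightarrow> refl R \<and> total R \<and> trans R"

typedef 'a wo = "{R :: ('a \<times> 'a) set. weak_order R}"
  by (rule exI[of _ UNIV]) (auto simp: weak_order_def refl_on_def total_on_def trans_def)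

text \<open>The extended set of preferences: weak orders plus the element c (Cyc).\<close>
datatype 'a upref = WO "'a wo" | Cyc

definition strict :: "('a \<times> 'a) set \<Rightarrow> 'a \<Rightarrow> 'a \<Rightarrow> bool" where
  "strict R x y \<longleftrightarrow> (x, y) \<in> R \<and> (y, x) \<notin> R"

fun sle :: "'a upref \<Rightarrow> 'a upref \<Rightarrow> bool" where
  "sle Cyc _ = True"
| "sle (WO r) Cyc = False"
| "sle (WO r) (WO s) = (\<forall>x y. strict (Rep_wo s) x y \<longrightarrow> strict (Rep_wo r) x y)"

definition is_meet :: "'a upref \<Rightarrow> 'a upref \<Rightarrow> 'a upref \<Rightarrow> bool" where
  "is_meet x y m \<longleftrightarrow> sle m x \<and> sle m y \<and> (\<forall>z. sle z x \<and> sle z y \<longrightarrow> sle z m)"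

definition meet :: "'a upref \<Rightarrow> 'a upref \<Rightarrow> 'a upref" where
  "meet x y = (THE m. is_meet x y m)"

definition valid :: "('i \<Rightarrow> 'a upref) \<Rightarrow> bool" where
  "valid p \<longleftrightarrow> (\<forall>j. p j \<noteq> Cyc)"

definition consistent :: "('i \<Rightarrow> 'a upref) \<Rightarrow> ('i \<Rightarrow> 'a upref) \<Rightarrow> bool" where
  "consistent p q \<longleftrightarrow> (\<forall>j. meet (p j) (q j) \<noteq> Cyc)"

definition indiff :: "'a upref" where
  "indiff = WO (Abs_wo UNIV)"

fun urel :: "'a upref \<Rightarrow> ('a \<times> 'a) set" where
  "urel (WO r) = Rep_wo r"
| "urel Cyc = {}"

text \<open>Unanimity and IIA: the output Cyc is understood as an intransitive assignment of
  pairwise comparisons.  So w is assumed to arise from a function W assigning to each valid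
  profile a complete (reflexive, total) pairwise comparison relation, with w p = Cyc exactly
  when W p is intransitive, and W satisfying Unanimity and IIA.\<close>

definition unanimous_rel :: "(('i \<Rightarrow> 'a upref) \<Rightarrow> ('a \<times> 'a) set) \<Rightarrow> bool" where
  "unanimous_rel W \<longleftrightarrow> (\<forall>p x y. valid p \<longrightarrow> (\<forall>j. strict (urel (p j)) x y) \<longrightarrow> strict (W p) x y)"

definition iia_rel :: "(('i \<Rightarrow> 'a upref) \<Rightarrow> ('a \<times> 'a) set) \<Rightarrow> bool" where
  "iia_rel W \<longleftrightarrow> (\<forall>p q x y. valid p \<longrightarrow> valid q \<longrightarrow>
      (\<forall>j. urel (p j) \<inter> ({x, y} \<times> {x, y}) = urel (q j) \<inter> ({x, y} \<times> {x, y})) \<longrightarrow>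
      W p \<inter> ({x, y} \<times> {x, y}) = W q \<inter> ({x, y} \<times> {x, y}))"

definition induced_by :: "(('i \<Rightarrow> 'a upref) \<Rightarrow> 'a upref) \<Rightarrow> (('i \<Rightarrow> 'a upref) \<Rightarrow> ('a \<times> 'a) set) \<Rightarrow> bool" where
  "induced_by w W \<longleftrightarrow> (\<forall>p. valid p \<longrightarrow> refl (W p) \<and> total (W p) \<and>
      w p = (if trans (W p) then WO (Abs_wo (W p)) else Cyc))"

definition unanimity_iia :: "(('i \<Rightarrow> 'a upref) \<Rightarrow> 'a upref) \<Rightarrow> bool" where
  "unanimity_iia w \<longleftrightarrow> (\<exists>W. induced_by w W \<and> unanimous_rel W \<and> iia_rel W)"

definition dictator :: "(('i \<Rightarrow> 'a upref) \<Rightarrow> 'a upref) \<Rightarrow> 'i \<Rightarrow> bool" where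
  "dictator w i \<longleftrightarrow> (\<forall>p. valid p \<longrightarrow>
      (w p = Cyc \<longrightarrow> p i = indiff) \<and> (p i \<noteq> indiff \<longrightarrow> sle (w p) (p i)))"

definition non_dictatorship :: "(('i \<Rightarrow> 'a upref) \<Rightarrow> 'a upref) \<Rightarrow> bool" where
  "non_dictatorship w \<longleftrightarrow> \<not> (\<exists>i. dictator w i)"

definition consistency_respecting ::
  "(('i \<Rightarrow> 'a upref) \<Rightarrow> 'a upref) \<Rightarrow> (('i \<Rightarrow> 'a upref) \<Rightarrow> 'a upref \<Rightarrow> ('i \<Rightarrow> 'a upref))
     \<Rightarrow> ('i \<Rightarrow> 'a upref) \<Rightarrow> bool" where
  "consistency_respecting w app \<Upsilon> \<longleftrightarrow> (\<forall>d d'. valid d \<longrightarrow> valid d' \<longrightarrow>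
      (consistent d d' \<longleftrightarrow> consistent (app \<Upsilon> (w d)) (app \<Upsilon> (w d'))))"

end

theory Submission
  imports Defs
begin

definition rel2 :: "'a \<Rightarrow> 'a \<Rightarrow> ('a \<times> 'a) set" where
  "rel2 a b = {(x,y). x = a \<or> (x = b \<and> y \<noteq> a) \<or> (y \<noteq> a \<and> y \<noteq> b)}"

lemma rel2_wo: "a \<noteq> b \<Longrightarrow> weak_order (rel2 a b)"
  unfolding weak_order_def rel2_def refl_on_def total_on_def trans_def by auto

lemma urel_rel2: "a \<noteq> b \<Longrightarrow> urel (WO (Abs_wo (rel2 a b))) = rel2 a b"
  using rel2_wo Abs_wo_inverse by fastforce

lemma wo_eq:
  assumes "\<forall>x y. strict (Rep_wo s) x y \<longleftrightarrow> strict (Rep_wo r) x y"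
  shows "s = r"
proof -
  have ws: "weak_order (Rep_wo s)" and wr: "weak_order (Rep_wo r)" using Rep_wo by auto
  have "Rep_wo s = Rep_wo r"
  proof (intro set_eqI, clarify)
    fix x y
    show "((x,y) \<in> Rep_wo s) = ((x,y) \<in> Rep_wo r)"
      using assms[rule_format, of y x] ws wr
      unfolding weak_order_def strict_def refl_on_def total_on_def
      by (cases "x = y") blast+
  qed
  then show ?thesis using Rep_wo_inject by blast
qed

lemma meet_self: "meet (WO r) (WO r) = WO r"
proof -
  have "is_meet (WO r) (WO r) m \<longleftrightarrow> m = WO r" for m
  proof
    assume h: "is_meet (WO r) (WO r) m"
    then have "sle (WO r) m" unfolding is_meet_def by (metis sle.simps(3))
    moreover have "sle m (WO r)" using h unfolding is_meet_def by blast
    ultimately show "m = WO r"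
      by (cases m) (auto intro: wo_eq)
  qed (auto simp: is_meet_def)
  then show ?thesis unfolding meet_def by (intro the_equality) auto
qed

lemma meet_opp:
  assumes "strict (Rep_wo r) a b" "strict (Rep_wo s) b a"
  shows "meet (WO r) (WO s) = Cyc"
proof -
  have "is_meet (WO r) (WO s) m \<longleftrightarrow> m = Cyc" for m
  proof
    assume h: "is_meet (WO r) (WO s) m"
    show "m = Cyc"
    proof (cases m)
      case (WO t)
      then have "strict (Rep_wo t) a b" "strict (Rep_wo t) b a"
        using h assms unfolding is_meet_def by auto
      then show ?thesis unfolding strict_def by auto
    qed simp
  next
    assume "m = Cyc"
    then show "is_meet (WO r) (WO s) m" unfolding is_meet_def
      using assms apply auto
      subgoal for z by (cases z) (auto simp: strict_def)
      done
  qed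
  then show ?thesis unfolding meet_def by (intro the_equality) auto
qed

theorem theorem9:
  fixes w :: "('i::finite \<Rightarrow> 'a::finite upref) \<Rightarrow> 'a upref"
  assumes "card (UNIV :: 'a set) \<ge> 3"
    and "card (UNIV :: 'i set) \<ge> 2"
    and "unanimity_iia w"
    and "non_dictatorship w"
  shows "\<forall>app. \<not> (\<exists>\<Upsilon>. consistency_respecting w app \<Upsilon>)"
proof (intro allI notI, elim exE)
  fix app \<Upsilon>
  assume CR: "consistency_respecting w app \<Upsilon>"
  obtain W where ind: "induced_by w W" and iia: "iia_rel W"
    using assms(3) unfolding unanimity_iia_def by blast
  have "\<not> (\<forall>a b::'a. a = b)"
  proof
    assume h: "\<forall>a b::'a. a = b"
    then have "card (UNIV :: 'a set) \<le> Suc 0" using card_le_Suc0_iff_eq[of "UNIV :: 'a set"] by simp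
    then show False using assms(1) by simp
  qed
  then obtain a b :: 'a where ab: "a \<noteq> b" by blast
  have "\<not> (\<forall>a b::'i. a = b)"
  proof
    assume h: "\<forall>a b::'i. a = b"
    then have "card (UNIV :: 'i set) \<le> Suc 0" using card_le_Suc0_iff_eq[of "UNIV :: 'i set"] by simp
    then show False using assms(2) by simp
  qed
  then obtain i j :: 'i where ij: "i \<noteq> j" by blast
  define R where "R = (\<lambda>u v (k::'i). (if (k = i \<and> u) \<or> (k = j \<and> v) then rel2 b a else rel2 a b))"
  define prof where "prof = (\<lambda>u v k. (WO (Abs_wo (R u v k)) :: 'a upref))"
  have urel_prof: "urel (prof u v k) = R u v k" for u v k
    using urel_rel2[OF ab] urel_rel2[of b a] ab unfolding prof_def R_def by (cases "(k = i \<and> u) \<or> (k = j \<and> v)") auto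
  have valid: "valid (prof u v)" for u v unfolding valid_def prof_def by simp
  have c1: "W (prof u v) = W (prof u' v')"
    if A: "(a,b) \<in> W (prof u v) \<longleftrightarrow> (a,b) \<in> W (prof u' v')"
      and B: "(b,a) \<in> W (prof u v) \<longleftrightarrow> (b,a) \<in> W (prof u' v')" for u v u' v'
  proof (intro set_eqI, clarify)
    fix x y
    show "((x,y) \<in> W (prof u v)) = ((x,y) \<in> W (prof u' v'))"
    proof (cases "(x = a \<and> y = b) \<or> (x = b \<and> y = a)")
      case True then show ?thesis using A B by auto
    next
      case False
      have "\<forall>k. urel (prof u v k) \<inter> ({x, y} \<times> {x, y}) = urel (prof u' v' k) \<inter> ({x, y} \<times> {x, y})"
        unfolding urel_prof R_def using False ab by (auto simp: rel2_def)
      then have "W (prof u v) \<inter> ({x, y} \<times> {x, y}) = W (prof u' v') \<inter> ({x, y} \<times> {x, y})"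
        using iia valid unfolding iia_rel_def by blast
      then show ?thesis by blast
    qed
  qed
  have c2: "w (prof u v) = w (prof u' v')" if "W (prof u v) = W (prof u' v')" for u v u' v'
  proof -
    have "w (prof u v) = (if trans (W (prof u v)) then WO (Abs_wo (W (prof u v))) else Cyc)"
      "w (prof u' v') = (if trans (W (prof u' v')) then WO (Abs_wo (W (prof u' v'))) else Cyc)"
      using ind valid unfolding induced_by_def by blast+
    then show ?thesis using that by simp
  qed
  have cself: "consistent (prof u v) (prof u v)" for u v
    unfolding consistent_def prof_def by (simp add: meet_self)
  have RA: "Rep_wo (Abs_wo (rel2 a b)) = rel2 a b" "Rep_wo (Abs_wo (rel2 b a)) = rel2 b a"
    using urel_rel2[OF ab] urel_rel2[of b a] ab by auto
  have st: "strict (rel2 a b) a b" "strict (rel2 b a) b a"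
    using ab unfolding strict_def rel2_def by auto
  have c3: "u = u' \<and> v = v'" if "w (prof u v) = w (prof u' v')" for u v u' v'
  proof (rule ccontr)
    assume ne: "\<not> (u = u' \<and> v = v')"
    have "consistent (prof u v) (prof u' v')"
    proof -
      have "consistent (prof u v) (prof u' v') \<longleftrightarrow> consistent (app \<Upsilon> (w (prof u v))) (app \<Upsilon> (w (prof u' v')))"
        "consistent (prof u v) (prof u v) \<longleftrightarrow> consistent (app \<Upsilon> (w (prof u v))) (app \<Upsilon> (w (prof u v)))"
        using CR valid unfolding consistency_respecting_def by blast+
      then show ?thesis using that cself by simp
    qed
    moreover obtain k where k: "((k = i \<and> u) \<or> (k = j \<and> v)) \<noteq> ((k = i \<and> u') \<or> (k = j \<and> v'))"
    proof (cases "u = u'")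
      case True
      then have "v \<noteq> v'" using ne by blast
      then show ?thesis using that[of j] ij by blast
    next
      case False
      then show ?thesis using that[of i] ij by blast
    qed
    moreover have "meet (prof u v k) (prof u' v' k) = Cyc"
    proof (cases "(k = i \<and> u) \<or> (k = j \<and> v)")
      case True
      then have "prof u v k = WO (Abs_wo (rel2 b a))" "prof u' v' k = WO (Abs_wo (rel2 a b))"
        using k unfolding prof_def R_def by auto
      then show ?thesis using meet_opp[of "Abs_wo (rel2 b a)" b a "Abs_wo (rel2 a b)"] RA st by simp
    next
      case False
      then have "prof u v k = WO (Abs_wo (rel2 a b))" "prof u' v' k = WO (Abs_wo (rel2 b a))"
        using k unfolding prof_def R_def by auto
      then show ?thesis using meet_opp[of "Abs_wo (rel2 a b)" a b "Abs_wo (rel2 b a)"] RA st by simp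
    qed
    ultimately show False unfolding consistent_def by metis
  qed
  have tot: "(a,b) \<in> W (prof u v) \<or> (b,a) \<in> W (prof u v)" for u v
    using ind valid ab unfolding induced_by_def total_on_def by blast
  define A where "A u v = ((a,b) \<in> W (prof u v))" for u v
  define B where "B u v = ((b,a) \<in> W (prof u v))" for u v
  have c: "A u v = A u' v' \<Longrightarrow> B u v = B u' v' \<Longrightarrow> u = u' \<and> v = v'" for u v u' v'
    using c1[of u v u' v'] c2[of u v u' v'] c3[of u v u' v'] unfolding A_def B_def by blast
  have t: "A u v \<or> B u v" for u v using tot unfolding A_def B_def by blast
  show False
    using c[of True True True False] c[of True True False True] c[of True True False False]
      c[of True False False True] c[of True False False False] c[of False True False False]
      t[of True True] t[of True False] t[of False True] t[of False False]
    by (cases "A True True"; cases "A True False"; cases "A False True"; cases "A False False";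
        cases "B True True"; cases "B True False"; cases "B False True"; cases "B False False"; simp)

qed

end
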